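(* Let $A_1,\ldots,A_m\in\mathbb{M}_n^+$ and $\lambda_1,\ldots,\lambda_m>0$ with $\sum_{i=1}^m\lambda_i=1$. Let $p>1$ and $q$ be defined by $p^{-1}+q^{-1}=1$. Then for every symmetric norm $\|\cdot\|$ on $\mathbb{M}_n$ and every non-decreasing geometrically convex function $g$, $$\Big\|g\Big(\sum_{i=1}^m\lambda_iA_i\Big)\Big\|\le \|g(I)\|^{1/q}\cdot\Big\|g\Big(\sum_{i=1}^m\lambda_iA_i^p\Big)\Big\|^{1/p}.$$
   Context: $\mathbb{M}_n$ denotes the space of $n\times n$ complex matrices and $\mathbb{M}_n^+$ its positive semidefinite cone; $I$ is the identity matrix. A symmetric norm on $\mathbb{M}_n$ is a norm satisfying $\|UAV\|=\|A\|$ for all $A\in\mathbb{M}_n$ and all unitary $U,V$. A function $g:[0,\infty)\to[0,\infty)$ is geometrically convex if it is continuous, non-negative, and $g(\sqrt{ab})\le\sqrt{g(a)g(b)}$ for all $a,b>0$; $g$ is applied to positive semidefinite matrices by functional calculus. *)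

theory Defs
  imports "HOL-Analysis.Analysis"
begin

type_synonym 'n cmat = "complex^'n^'n"

definition adjoint_mat :: "'n::finite cmat \<Rightarrow> 'n cmat" where
  "adjoint_mat A = (\<chi> i j. cnj (A $ j $ i))"

definition unitary_mat :: "'n::finite cmat \<Rightarrow> bool" where
  "unitary_mat U \<longleftrightarrow> U ** adjoint_mat U = mat 1 \<and> adjoint_mat U ** U = mat 1"

definition cscale_mat :: "complex \<Rightarrow> 'n::finite cmat \<Rightarrow> 'n cmat" where
  "cscale_mat c A = (\<chi> i j. c * A $ i $ j)"

definition psd :: "'n::finite cmat \<Rightarrow> bool" where
  "psd A \<longleftrightarrow> (\<forall>x::complex^'n.
     let q = (\<Sum>i\<in>UNIV. cnj (x $ i) * (A *v x) $ i) in Im q = 0 \<and> Re q \<ge> 0)"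

definition real_diag :: "('n::finite \<Rightarrow> real) \<Rightarrow> 'n cmat" where
  "real_diag d = (\<chi> i j. if i = j then complex_of_real (d i) else 0)"

definition matfun :: "(real \<Rightarrow> real) \<Rightarrow> 'n::finite cmat \<Rightarrow> 'n cmat" where
  "matfun g A = (SOME B. \<exists>U d. unitary_mat U \<and> (\<forall>i. d i \<ge> 0) \<and>
       A = U ** real_diag d ** adjoint_mat U \<and> B = U ** real_diag (\<lambda>i. g (d i)) ** adjoint_mat U)"

definition mat_powr :: "'n::finite cmat \<Rightarrow> real \<Rightarrow> 'n cmat" where
  "mat_powr A p = matfun (\<lambda>t. t powr p) A"

definition symmetric_norm :: "('n::finite cmat \<Rightarrow> real) \<Rightarrow> bool" where
  "symmetric_norm N \<longleftrightarrow>
     (\<forall>A. N A \<ge> 0) \<and> (\<forall>A. N A = 0 \<longleftrightarrow> A = 0) \<and>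
     (\<forall>A B. N (A + B) \<le> N A + N B) \<and>
     (\<forall>c A. N (cscale_mat c A) = cmod c * N A) \<and>
     (\<forall>A U V. unitary_mat U \<longrightarrow> unitary_mat V \<longrightarrow> N (U ** A ** V) = N A)"

definition geom_convex :: "(real \<Rightarrow> real) \<Rightarrow> bool" where
  "geom_convex g \<longleftrightarrow> continuous_on {0..} g \<and> (\<forall>x\<ge>0. g x \<ge> 0) \<and>
     (\<forall>a b. a > 0 \<longrightarrow> b > 0 \<longrightarrow> g (sqrt (a * b)) \<le> sqrt (g a * g b))"

end

theory Submission
  imports Defs
begin

definition cinner :: "complex^'n::finite \<Rightarrow> complex^'n \<Rightarrow> complex" where
  "cinner x y = (\<Sum>i\<in>UNIV. cnj (x$i) * y$i)"

lemma cinner_add_right: "cinner x (y + z) = cinner x y + cinner x z"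
  by (simp add: cinner_def distrib_left sum.distrib)
lemma cinner_add_left: "cinner (x + y) z = cinner x z + cinner y z"
  by (simp add: cinner_def distrib_right sum.distrib)
lemma cinner_diff_right: "cinner x (y - z) = cinner x y - cinner x z"
  by (simp add: cinner_def right_diff_distrib sum_subtractf)
lemma cinner_diff_left: "cinner (x - y) z = cinner x z - cinner y z"
  by (simp add: cinner_def left_diff_distrib sum_subtractf)
lemma cinner_scale_right: "cinner x (c *s y) = c * cinner x y"
  by (simp add: cinner_def sum_distrib_left mult_ac)
lemma cinner_scale_left: "cinner (c *s x) y = cnj c * cinner x y"
  by (simp add: cinner_def sum_distrib_left mult_ac)
lemma cinner_zero_right[simp]: "cinner x 0 = 0" by (simp add: cinner_def)
lemma cinner_zero_left[simp]: "cinner 0 x = 0" by (simp add: cinner_def)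
lemma cinner_commute: "cinner y x = cnj (cinner x y)"
  by (simp add: cinner_def mult.commute)
lemma cinner_sum_right: "cinner x (\<Sum>j\<in>S. f j) = (\<Sum>j\<in>S. cinner x (f j))"
  by (induct S rule: infinite_finite_induct) (auto simp: cinner_add_right)
lemma cinner_sum_left: "cinner (\<Sum>j\<in>S. f j) x = (\<Sum>j\<in>S. cinner (f j) x)"
  by (induct S rule: infinite_finite_induct) (auto simp: cinner_add_left)

lemma cinner_self: "cinner x x = complex_of_real (\<Sum>i\<in>UNIV. (cmod (x$i))^2)"
  unfolding cinner_def of_real_sum
  by (intro sum.cong refl) (simp only: mult.commute[of "cnj _"] complex_norm_square[symmetric] of_real_power)

lemma cinner_self_real: "Re (cinner x x) = (\<Sum>i\<in>UNIV. (cmod (x$i))^2)" "Im (cinner x x) = 0"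
  by (simp_all add: cinner_self)

lemma cinner_self_nonneg: "Re (cinner x x) \<ge> 0"
  by (simp add: cinner_self_real sum_nonneg)

lemma norm_sq_cinner: "(norm x)^2 = Re (cinner x x)"
  unfolding cinner_self_real norm_vec_def L2_set_def
  by (simp add: sum_nonneg)

lemma cinner_self_eq_0: "cinner x x = 0 \<longleftrightarrow> x = 0"
proof -
  have "cinner x x = 0 \<longleftrightarrow> (norm x)^2 = 0"
    using cinner_self_real[of x] norm_sq_cinner[of x] by (metis complex_eq_iff zero_complex.simps)
  thus ?thesis by simp
qed

lemma cinner_matrix: "cinner x (A *v y) = cinner (adjoint_mat A *v x) y"
  unfolding cinner_def matrix_vector_mult_def adjoint_mat_def
  apply (simp add: sum_distrib_left sum_distrib_right)
  apply (subst sum.swap)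
  apply (simp add: mult_ac)
  done

lemma adjoint_mult: "adjoint_mat (A ** B) = adjoint_mat B ** adjoint_mat A"
  unfolding adjoint_mat_def matrix_matrix_mult_def
  by (simp add: vec_eq_iff mult.commute)

lemma adj_adj[simp]: "adjoint_mat (adjoint_mat A) = A"
  unfolding adjoint_mat_def by (simp add: vec_eq_iff)

lemma adjoint_mat1[simp]: "adjoint_mat (mat 1) = mat 1"
  unfolding adjoint_mat_def mat_def by (simp add: vec_eq_iff)

lemma adjoint_real_diag[simp]: "adjoint_mat (real_diag d) = real_diag d"
  unfolding adjoint_mat_def real_diag_def by (simp add: vec_eq_iff)

lemma adjoint_add: "adjoint_mat (A + B) = adjoint_mat A + adjoint_mat B"
  unfolding adjoint_mat_def by (simp add: vec_eq_iff)

lemma adjoint_scaleR: "adjoint_mat (r *\<^sub>R A) = r *\<^sub>R adjoint_mat A"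
  unfolding adjoint_mat_def by (simp add: vec_eq_iff)

lemma unitary_adjoint: "unitary_mat U \<Longrightarrow> unitary_mat (adjoint_mat U)"
  unfolding unitary_mat_def by simp

lemma unitary_mult: "unitary_mat U \<Longrightarrow> unitary_mat V \<Longrightarrow> unitary_mat (U ** V)"
  unfolding unitary_mat_def adjoint_mult
  by (metis matrix_mul_assoc matrix_mul_lid)

lemma unitary_mat1: "unitary_mat (mat 1)"
  unfolding unitary_mat_def by simp

lemma unitary_cinner: "unitary_mat U \<Longrightarrow> cinner (U *v x) (U *v y) = cinner x y"
  by (simp add: cinner_matrix matrix_vector_mul_assoc unitary_mat_def)

lemma psd_cinner: "psd A \<longleftrightarrow> (\<forall>x. Im (cinner x (A *v x)) = 0 \<and> Re (cinner x (A *v x)) \<ge> 0)"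
  unfolding psd_def cinner_def Let_def by simp


lemma mv_add: "(A::complex^'n::finite^'n) *v (x + y) = A *v x + A *v y"
  by (simp add: matrix_vector_right_distrib)
lemma mv_scale: "(A::complex^'n::finite^'n) *v (c *s x) = c *s (A *v x)"
  unfolding vec_eq_iff matrix_vector_mult_def
  apply (simp add: sum_distrib_left)
  apply (intro allI sum.cong refl)
  apply (simp add: algebra_simps)
  done
lemma mv_diff_mat: "((A::complex^'n::finite^'n) - B) *v x = A *v x - B *v x"
  unfolding vec_eq_iff matrix_vector_mult_def
  apply simp
  apply (simp add: sum_subtractf[symmetric])
  apply (intro allI sum.cong refl)
  apply (simp add: algebra_simps)
  done
lemma mv_add_mat: "((A::complex^'n::finite^'n) + B) *v x = A *v x + B *v x"
  by (simp add: matrix_vector_mult_def vec_eq_iff sum.distrib distrib_right)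
lemma mv_scaleR_mat: "(r *\<^sub>R (A::complex^'n::finite^'n)) *v x = complex_of_real r *s (A *v x)"
proof -
  have "(r *\<^sub>R A)$i$j = complex_of_real r * A$i$j" for i j
    by (simp add: scaleR_conv_of_real[symmetric])
  thus ?thesis by (simp add: matrix_vector_mult_def vec_eq_iff sum_distrib_left mult.assoc)
qed
lemma mv_sum_mat: "(\<Sum>i\<in>S. (A i::complex^'n::finite^'n)) *v x = (\<Sum>i\<in>S. A i *v x)"
  by (induct S rule: infinite_finite_induct) (auto simp: mv_add_mat)

lemma cinner_axis: "cinner (axis r 1) v = v $ r"
proof -
  have "\<And>i. cnj (axis r 1 $ i) * v $ i = (if i = r then v $ r else 0)" by (simp add: axis_def)
  thus ?thesis by (simp add: cinner_def)
qed

lemma mv_axis: "((B::complex^'n::finite^'n) *v axis c 1) $ r = B $ r $ c"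
proof -
  have "\<And>i. B $ r $ i * axis c 1 $ i = (if i = c then B $ r $ c else 0)" by (simp add: axis_def)
  thus ?thesis by (simp add: matrix_vector_mult_def)
qed

lemma quad_zero:
  assumes "\<And>x. cinner x (B *v x) = 0"
  shows "B = 0"
proof -
  have bil: "cinner x (B *v y) = 0" for x y
  proof -
    let ?a = "cinner x (B *v y)" and ?b = "cinner y (B *v x)"
    have "cinner (x + y) (B *v (x + y)) = 0" by (rule assms)
    hence "?b + ?a = 0"
      using assms[of x] assms[of y] by (simp add: mv_add cinner_add_left cinner_add_right)
    hence e1: "?a + ?b = 0" by (simp add: add.commute)
    have "cinner (x + \<i> *s y) (B *v (x + \<i> *s y)) = 0" by (rule assms)
    hence "\<i> * ?a - \<i> * ?b = 0"
      using assms[of x] assms[of y]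
      by (simp add: mv_add mv_scale cinner_add_left cinner_add_right cinner_scale_left cinner_scale_right)
    hence "?a - ?b = 0" by (metis complex_i_not_zero mult_eq_0_iff right_diff_distrib)
    have "2 * ?a = (?a + ?b) + (?a - ?b)" by simp
    with e1 \<open>?a - ?b = 0\<close> show ?thesis by simp
  qed
  show ?thesis
    using bil[of "axis _ 1" "axis _ 1"] by (simp add: vec_eq_iff cinner_axis mv_axis)
qed

definition hermitian :: "complex^'n^'n \<Rightarrow> bool" where
  "hermitian H \<longleftrightarrow> adjoint_mat H = H"

lemma psd_hermitian:
  assumes "psd A" shows "hermitian A"
proof -
  have "cinner x ((A - adjoint_mat A) *v x) = 0" for x
  proof -
    let ?q = "cinner x (A *v x)"
    have im: "Im ?q = 0" using assms psd_cinner by blast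
    have "cinner x ((A - adjoint_mat A) *v x) = ?q - cinner (A *v x) x"
      using cinner_matrix[of x "adjoint_mat A" x] by (simp add: mv_diff_mat cinner_diff_right)
    also have "cinner (A *v x) x = cnj ?q" by (simp add: cinner_commute[of "A *v x"])
    finally show ?thesis using im by (simp add: complex_eq_iff)
  qed
  hence "A - adjoint_mat A = 0" by (rule quad_zero)
  thus ?thesis unfolding hermitian_def by simp
qed

lemma hermitian_cinner: "hermitian H \<Longrightarrow> cinner x (H *v y) = cinner (H *v x) y"
  unfolding hermitian_def by (metis cinner_matrix)

lemma hermitian_quad_real: "hermitian H \<Longrightarrow> Im (cinner x (H *v x)) = 0"
proof -
  assume h: "hermitian H"
  have "cinner x (H *v x) = cnj (cinner x (H *v x))"
    using hermitian_cinner[OF h, of x x] cinner_commute[of x "H *v x"] by simp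
  hence "Im (cinner x (H *v x)) = Im (cnj (cinner x (H *v x)))" by simp
  thus ?thesis by simp
qed


definition orthonormal_set :: "(complex^'n::finite) set \<Rightarrow> bool" where
  "orthonormal_set B \<longleftrightarrow> (\<forall>x\<in>B. \<forall>y\<in>B. cinner x y = (if x = y then 1 else 0))"

lemma cinner_sum_scale:
  assumes "orthonormal_set B" "finite B" "x \<in> B"
  shows "cinner x (\<Sum>y\<in>B. f y *s y) = f x"
proof -
  have "cinner x (\<Sum>y\<in>B. f y *s y) = (\<Sum>y\<in>B. f y * cinner x y)"
    by (simp add: cinner_sum_right cinner_scale_right)
  also have "\<dots> = (\<Sum>y\<in>B. if y = x then f x else 0)"
    using assms(1,3) unfolding orthonormal_set_def by (intro sum.cong refl) auto
  also have "\<dots> = f x" using assms(2,3) by simp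
  finally show ?thesis .
qed

lemma on_independent:
  assumes "orthonormal_set B" "finite B"
  shows "vec.independent B"
proof (rule vec.independent_if_scalars_zero[OF assms(2)])
  fix f x assume s: "(\<Sum>x\<in>B. f x *s x) = 0" and x: "x \<in> B"
  have "f x = cinner x (\<Sum>y\<in>B. f y *s y)" using cinner_sum_scale[OF assms x] by simp
  thus "f x = 0" using s by simp
qed

lemma on_expand:
  assumes "orthonormal_set B" "finite B" "z \<in> vec.span B"
  shows "z = (\<Sum>b\<in>B. cinner b z *s b)"
  using assms(3)
proof (induct rule: vec.span_induct_alt)
  case base
  then show ?case by simp
next
  case (step c x y)
  have "(\<Sum>b\<in>B. cinner b (c *s x + y) *s b) = (\<Sum>b\<in>B. (c * cinner b x) *s b) + (\<Sum>b\<in>B. cinner b y *s b)"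
    by (simp add: cinner_add_right cinner_scale_right vector_sadd_rdistrib sum.distrib)
  also have "(\<Sum>b\<in>B. (c * cinner b x) *s b) = (\<Sum>b\<in>B. if b = x then c *s x else 0)"
    using assms(1) step(1) unfolding orthonormal_set_def by (intro sum.cong refl) auto
  also have "\<dots> = c *s x" using assms(2) step(1) by simp
  finally show ?case using step(2) by simp
qed

definition proj_on :: "(complex^'n::finite) set \<Rightarrow> complex^'n \<Rightarrow> complex^'n" where
  "proj_on B x = (\<Sum>b\<in>B. cinner b x *s b)"

lemma proj_on_linear: "Vector_Spaces.linear (*s) (*s) (proj_on B)"
  unfolding Vector_Spaces.linear_iff proj_on_def
  by (simp add: vec.vector_space_axioms cinner_add_right cinner_scale_right vector_sadd_rdistrib
      sum.distrib vec.scale_sum_right vector_smult_assoc)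

lemma proj_on_diff: "proj_on B (x - y) = proj_on B x - proj_on B y"
  unfolding proj_on_def by (simp add: cinner_diff_right vector_sub_rdistrib sum_subtractf)

lemma kernel_lemma:
  assumes on: "orthonormal_set B" and fin: "finite B" and W: "vec.subspace W"
    and dim: "card B < vec.dim W"
  shows "\<exists>x\<in>W. x \<noteq> 0 \<and> (\<forall>b\<in>B. cinner b x = 0)"
proof -
  let ?f = "proj_on B"
  have img: "?f ` W \<subseteq> vec.span B"
  proof (rule image_subsetI)
    fix x show "?f x \<in> vec.span B" unfolding proj_on_def
      by (rule vec.span_sum, rule vec.span_scale, rule vec.span_base)
  qed
  have "vec.dim (?f ` W) \<le> card B" using vec.dim_le_card[OF img fin] .
  hence "\<not> inj_on ?f (vec.span W)"
    using vec.dim_image_eq[OF proj_on_linear[of B], of W] dim by auto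
  hence "\<not> inj_on ?f W" using W by (metis vec.span_eq_iff)
  then obtain x y where xy: "x \<in> W" "y \<in> W" "x \<noteq> y" "?f x = ?f y"
    unfolding inj_on_def by blast
  let ?z = "x - y"
  have zW: "?z \<in> W" using vec.subspace_diff[OF W xy(1,2)] .
  have z0: "?z \<noteq> 0" using xy(3) by simp
  have fz: "?f ?z = 0" using xy(4) by (simp add: proj_on_diff)
  have "cinner b ?z = 0" if b: "b \<in> B" for b
  proof -
    have "cinner b (?f ?z) = cinner b ?z"
      unfolding proj_on_def using cinner_sum_scale[OF on fin b, of "\<lambda>c. cinner c ?z"] .
    thus ?thesis using fz by simp
  qed
  thus ?thesis using zW z0 by blast
qed

lemma on_dim_span:
  assumes "orthonormal_set B" "finite B"
  shows "vec.dim (vec.span B) = card B"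
  using vec.dim_span_eq_card_independent[OF on_independent[OF assms]] .


lemma cont_nth:
  fixes F :: "'a::topological_space \<Rightarrow> 'b::real_normed_vector^'n"
  assumes "continuous_on S F" shows "continuous_on S (\<lambda>x. F x $ i)"
  by (rule continuous_on_compose2[OF linear_continuous_on[OF bounded_linear_vec_nth, of UNIV] assms subset_UNIV])

lemma cont_cinner:
  assumes "continuous_on S F" "continuous_on S G"
  shows "continuous_on S (\<lambda>x. cinner (F x) (G x))"
  unfolding cinner_def
  by (intro continuous_intros cont_nth assms)

lemma cinner_self_of_real: "cinner z z = complex_of_real ((norm z)^2)"
  by (simp add: norm_sq_cinner complex_eq_iff cinner_self_real)

lemma quad_lemma:
  fixes a b :: real
  assumes "\<And>t. a * t + b * t^2 \<le> 0"
  shows "a = 0"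
proof (rule ccontr)
  assume a: "a \<noteq> 0"
  define c where "c = \<bar>b\<bar> + 1"
  have c: "c \<ge> 1" unfolding c_def by simp
  define t where "t = a / (2 * c)"
  have "a * t + b * t^2 \<ge> a^2 / (2*c) - \<bar>b\<bar> * (a^2 / (4 * c^2))"
  proof -
    have "a * t = a^2 / (2*c)" unfolding t_def by (simp add: power2_eq_square)
    moreover have "t^2 = a^2 / (4 * c^2)" unfolding t_def by (simp add: power_divide)
    moreover have "b * (a^2 / (4 * c^2)) \<ge> - \<bar>b\<bar> * (a^2 / (4 * c^2))"
    proof -
      have "0 \<le> a^2 / (4 * c^2)" by simp
      from mult_right_mono[OF abs_ge_minus_self[of b] this] show ?thesis by simp
    qed
    ultimately show ?thesis by simp
  qed
  moreover have "\<bar>b\<bar> * (a^2 / (4 * c^2)) \<le> a^2 / (4 * c)"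
  proof -
    have "\<bar>b\<bar> \<le> c" unfolding c_def by simp
    hence "\<bar>b\<bar> * (a^2 / (4 * c^2)) \<le> c * (a^2 / (4 * c^2))"
      by (intro mult_right_mono) auto
    also have "\<dots> = a^2 / (4 * c)" using c by (simp add: power2_eq_square)
    finally show ?thesis .
  qed
  moreover have "a^2 / (2*c) - a^2 / (4*c) > 0"
  proof -
    have "a^2 > 0" using a by simp
    hence "a^2 / (4*c) > 0" using c by simp
    moreover have "a^2 / (2*c) = 2 * (a^2 / (4*c))" by simp
    ultimately show ?thesis by simp
  qed
  ultimately have "a * t + b * t^2 > 0" by linarith
  with assms[of t] show False by simp
qed

definition Qf :: "complex^'n^'n \<Rightarrow> complex^'n::finite \<Rightarrow> real" where
  "Qf H x = Re (cinner x (H *v x))"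

lemma cnj_mult_self: "cnj c * c = complex_of_real ((cmod c)^2)"
  by (metis complex_norm_square mult.commute)

lemma cinner_scale_self: "cinner (c *s x) (c *s x) = complex_of_real ((cmod c)^2) * cinner x x"
proof -
  have "cinner (c *s x) (c *s x) = (cnj c * c) * cinner x x"
    by (simp add: cinner_scale_left cinner_scale_right mult.assoc)
  thus ?thesis by (simp only: cnj_mult_self)
qed

lemma Qf_scale: "Qf H (c *s x) = (cmod c)^2 * Qf H x"
proof -
  have "cinner (c *s x) (H *v (c *s x)) = (cnj c * c) * cinner x (H *v x)"
    by (simp add: mv_scale cinner_scale_left cinner_scale_right mult.assoc)
  hence "cinner (c *s x) (H *v (c *s x)) = complex_of_real ((cmod c)^2) * cinner x (H *v x)"
    by (simp only: cnj_mult_self)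
  thus ?thesis unfolding Qf_def by simp
qed

lemma Qf_zero[simp]: "Qf H 0 = 0"
  unfolding Qf_def by (simp add: matrix_vector_mult_def cinner_def)

lemma Qf_expand:
  assumes h: "hermitian H"
  shows "Qf H (x + complex_of_real t *s y) = Qf H x + 2 * t * Re (cinner y (H *v x)) + t^2 * Qf H y"
proof -
  let ?t = "complex_of_real t"
  have e: "cinner x (H *v y) = cnj (cinner y (H *v x))"
    using hermitian_cinner[OF h, of x y] cinner_commute[of "H *v x" y] by simp
  have "cinner (x + ?t *s y) (H *v (x + ?t *s y)) =
     cinner x (H *v x) + ?t * cinner x (H *v y) + ?t * cinner y (H *v x) + ?t * ?t * cinner y (H *v y)"
    by (simp add: mv_add mv_scale cinner_add_left cinner_add_right cinner_scale_left cinner_scale_right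
        algebra_simps)
  hence "Qf H (x + ?t *s y) = Qf H x + t * Re (cinner x (H *v y)) + t * Re (cinner y (H *v x)) + t * t * Qf H y"
    unfolding Qf_def by simp
  thus ?thesis using e by (simp add: power2_eq_square)
qed

lemma hermitian_mat1: "hermitian (mat 1)"
  unfolding hermitian_def by simp

lemma Qf_mat1: "Qf (mat 1) x = Re (cinner x x)"
  unfolding Qf_def by simp

lemma eig_step:
  assumes h: "hermitian H" and fin: "finite B" and on: "orthonormal_set B"
    and eigB: "\<forall>b\<in>B. \<exists>c. H *v b = c *s b" and card: "card B < CARD('n::finite)"
  shows "\<exists>x::complex^'n. (\<forall>b\<in>B. cinner b x = 0) \<and> cinner x x = 1 \<and>
     H *v x = complex_of_real (Qf H x) *s x \<and>
     (\<forall>y. (\<forall>b\<in>B. cinner b y = 0) \<and> cinner y y = 1 \<longrightarrow> Qf H y \<le> Qf H x)"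
proof -
  define K where "K = {x::complex^'n. (\<forall>b\<in>B. cinner b x = 0) \<and> cinner x x = 1}"
  have Keq: "K = (\<Inter>b\<in>B. {x. cinner b x = 0}) \<inter> {x. cinner x x = 1}"
    unfolding K_def by auto
  have cl: "closed K" unfolding Keq
    by (intro closed_Int closed_INT ballI closed_Collect_eq cont_cinner continuous_on_const continuous_on_id)
  have bd: "bounded K"
  proof (rule bounded_subset[OF bounded_cball[of 0 1]])
    show "K \<subseteq> cball 0 1"
    proof
      fix x assume "x \<in> K"
      hence "(norm x)^2 = 1" unfolding K_def by (simp add: norm_sq_cinner)
      hence "norm x = 1" using norm_ge_zero[of x] by (simp add: power2_eq_1_iff)
      thus "x \<in> cball 0 1" by simp
    qed
  qed
  have cpt: "compact K" using cl bd by (simp add: compact_eq_bounded_closed)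
  obtain z :: "complex^'n" where z: "z \<noteq> 0" "\<forall>b\<in>B. cinner b z = 0"
    using kernel_lemma[OF on fin vec.subspace_UNIV] card vec_dim_card[where 'a=complex and 'n='n] by auto
  define x0 where "x0 = complex_of_real (1 / norm z) *s z"
  have "x0 \<in> K"
  proof -
    have "cinner x0 x0 = complex_of_real ((cmod (complex_of_real (1/norm z)))^2) * cinner z z"
      unfolding x0_def by (rule cinner_scale_self)
    also have "\<dots> = complex_of_real ((1/norm z)^2 * (norm z)^2)"
      by (simp only: cinner_self_of_real norm_of_real power2_abs of_real_mult)
    also have "\<dots> = 1" using z(1) by (simp add: power_divide)
    finally show ?thesis unfolding K_def x0_def using z(2) by (simp add: cinner_scale_right)
  qed
  hence Kne: "K \<noteq> {}" by auto
  have cQ: "continuous_on K (Qf H)"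
    unfolding Qf_def[abs_def]
    by (intro continuous_intros cont_cinner continuous_on_id)
  obtain x where xK: "x \<in> K" and xmax: "\<forall>y\<in>K. Qf H y \<le> Qf H x"
    using continuous_attains_sup[OF cpt Kne cQ] by blast
  define \<mu> where "\<mu> = Qf H x"
  have x1: "cinner x x = 1" and xB: "\<forall>b\<in>B. cinner b x = 0" using xK unfolding K_def by auto
  have bound: "Qf H v \<le> \<mu> * Re (cinner v v)" if vB: "\<forall>b\<in>B. cinner b v = 0" for v
  proof (cases "v = 0")
    case True thus ?thesis by simp
  next
    case False
    define w where "w = complex_of_real (1 / norm v) *s v"
    have "cinner w w = complex_of_real ((cmod (complex_of_real (1/norm v)))^2) * cinner v v"
      unfolding w_def by (rule cinner_scale_self)
    also have "\<dots> = complex_of_real ((1/norm v)^2 * (norm v)^2)"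
      by (simp only: cinner_self_of_real norm_of_real power2_abs of_real_mult)
    also have "\<dots> = 1" using False by (simp add: power_divide)
    finally have "w \<in> K" unfolding K_def w_def using vB by (simp add: cinner_scale_right)
    hence "Qf H w \<le> \<mu>" using xmax \<mu>_def by auto
    moreover have "Qf H w = (1/norm v)^2 * Qf H v" unfolding w_def Qf_scale
      by (simp only: norm_of_real power2_abs)
    ultimately have "(1/norm v)^2 * Qf H v \<le> \<mu>" by simp
    hence "Qf H v \<le> \<mu> * (norm v)^2" using False
      by (simp add: power_divide field_simps)
    thus ?thesis by (simp add: norm_sq_cinner)
  qed
  have key: "Re (cinner y (H *v x)) = \<mu> * Re (cinner y x)" if yB: "\<forall>b\<in>B. cinner b y = 0" for y
  proof -
    have "(2 * Re (cinner y (H *v x)) - 2 * \<mu> * Re (cinner y x)) * t + (Qf H y - \<mu> * Re (cinner y y)) * t^2 \<le> 0" for t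
    proof -
      let ?v = "x + complex_of_real t *s y"
      have "\<forall>b\<in>B. cinner b ?v = 0" using xB yB by (simp add: cinner_add_right cinner_scale_right)
      from bound[OF this] have "Qf H ?v \<le> \<mu> * Re (cinner ?v ?v)" .
      moreover have "Qf H ?v = \<mu> + 2 * t * Re (cinner y (H *v x)) + t^2 * Qf H y"
        using Qf_expand[OF h, of x t y] \<mu>_def by simp
      moreover have "Re (cinner ?v ?v) = 1 + 2 * t * Re (cinner y x) + t^2 * Re (cinner y y)"
        using Qf_expand[OF hermitian_mat1, of x t y] x1 by (simp add: Qf_mat1)
      ultimately show ?thesis by (simp add: algebra_simps)
    qed
    from quad_lemma[OF this] show ?thesis by simp
  qed
  define y where "y = H *v x - complex_of_real \<mu> *s x"
  have yB: "\<forall>b\<in>B. cinner b y = 0"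
  proof
    fix b assume b: "b \<in> B"
    obtain c where c: "H *v b = c *s b" using eigB b by blast
    have "cinner b (H *v x) = cinner (H *v b) x" using hermitian_cinner[OF h] .
    also have "\<dots> = 0" using c xB b by (simp add: cinner_scale_left)
    finally show "cinner b y = 0" unfolding y_def using xB b by (simp add: cinner_diff_right cinner_scale_right)
  qed
  have "Re (cinner y y) = Re (cinner y (H *v x)) - \<mu> * Re (cinner y x)"
    unfolding y_def[symmetric, of] by (simp add: y_def cinner_diff_right cinner_scale_right)
  also have "\<dots> = 0" using key[OF yB] by simp
  finally have "cinner y y = 0" using cinner_self_real(2)[of y] by (simp add: complex_eq_iff)
  hence "y = 0" by (simp add: cinner_self_eq_0)
  hence eig: "H *v x = complex_of_real (Qf H x) *s x" unfolding y_def \<mu>_def by simp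
  show ?thesis
    using xB x1 eig xmax unfolding K_def by blast
qed


definition spec_family :: "complex^'n^'n \<Rightarrow> nat \<Rightarrow> (nat \<Rightarrow> complex^'n::finite) \<Rightarrow> (nat \<Rightarrow> real) \<Rightarrow> bool" where
  "spec_family H k u \<mu> \<longleftrightarrow>
     (\<forall>i<k. \<forall>j<k. cinner (u i) (u j) = (if i = j then 1 else 0)) \<and>
     (\<forall>i<k. H *v u i = complex_of_real (\<mu> i) *s u i) \<and>
     (\<forall>i<k. \<forall>y. (\<forall>j<i. cinner (u j) y = 0) \<and> cinner y y = 1 \<longrightarrow> Qf H y \<le> \<mu> i)"

lemma spec_exists:
  assumes h: "hermitian (H::complex^'n::finite^'n)"
  shows "k \<le> CARD('n) \<Longrightarrow> \<exists>u \<mu>. spec_family H k u \<mu>"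
proof (induct k)
  case 0
  then show ?case unfolding spec_family_def by auto
next
  case (Suc k)
  then obtain u \<mu> where f: "spec_family H k u \<mu>" by auto
  have on_u: "\<And>i j. i < k \<Longrightarrow> j < k \<Longrightarrow> cinner (u i) (u j) = (if i = j then 1 else 0)"
    using f unfolding spec_family_def by blast
  have inj: "inj_on u {..<k}"
  proof (rule inj_onI)
    fix i j assume "i \<in> {..<k}" "j \<in> {..<k}" "u i = u j"
    thus "i = j" using on_u[of i j] on_u[of i i] by (auto split: if_splits)
  qed
  define B where "B = u ` {..<k}"
  have finB: "finite B" unfolding B_def by simp
  have cardB: "card B = k" unfolding B_def using card_image[OF inj] by simp
  have onB: "orthonormal_set B"
    unfolding orthonormal_set_def B_def
  proof (intro ballI)
    fix x y assume "x \<in> u ` {..<k}" "y \<in> u ` {..<k}"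
    then obtain i j where ij: "i < k" "j < k" "x = u i" "y = u j" by auto
    show "cinner x y = (if x = y then 1 else 0)"
      using on_u[OF ij(1,2)] inj ij by (auto simp: inj_on_def)
  qed
  have eigB: "\<forall>b\<in>B. \<exists>c. H *v b = c *s b"
    using f unfolding spec_family_def B_def by auto
  obtain x where xB: "\<forall>b\<in>B. cinner b x = 0" and x1: "cinner x x = 1"
    and xe: "H *v x = complex_of_real (Qf H x) *s x"
    and xm: "\<forall>y. (\<forall>b\<in>B. cinner b y = 0) \<and> cinner y y = 1 \<longrightarrow> Qf H y \<le> Qf H x"
    using eig_step[OF h finB onB eigB] cardB Suc(2) by auto
  define u' where "u' = u(k := x)"
  define \<mu>' where "\<mu>' = \<mu>(k := Qf H x)"
  have xu: "cinner (u i) x = 0" "cinner x (u i) = 0" if "i < k" for i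
    using xB that unfolding B_def by (auto simp: cinner_commute[of x])
  have "spec_family H (Suc k) u' \<mu>'"
    unfolding spec_family_def
  proof (intro conjI allI impI)
    fix i j assume "i < Suc k" "j < Suc k"
    thus "cinner (u' i) (u' j) = (if i = j then 1 else 0)"
      using on_u xu x1 unfolding u'_def by (cases "i = k"; cases "j = k") auto
  next
    fix i assume "i < Suc k"
    thus "H *v u' i = complex_of_real (\<mu>' i) *s u' i"
      using f xe unfolding u'_def \<mu>'_def spec_family_def by (cases "i = k") auto
  next
    fix i y assume i: "i < Suc k" and y: "(\<forall>j<i. cinner (u' j) y = 0) \<and> cinner y y = 1"
    show "Qf H y \<le> \<mu>' i"
    proof (cases "i = k")
      case True
      have "\<forall>b\<in>B. cinner b y = 0" using y True unfolding B_def u'_def by auto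
      then show ?thesis using xm y True unfolding \<mu>'_def by auto
    next
      case False
      hence "i < k" using i by simp
      moreover have "\<forall>j<i. cinner (u j) y = 0" using y \<open>i < k\<close> unfolding u'_def by auto
      ultimately show ?thesis using f y False unfolding spec_family_def \<mu>'_def by auto
    qed
  qed
  thus ?case by blast
qed

lemma spec_Qf:
  assumes "spec_family H k u \<mu>" "i < k"
  shows "Qf H (u i) = \<mu> i"
proof -
  have "H *v u i = complex_of_real (\<mu> i) *s u i" "cinner (u i) (u i) = 1"
    using assms unfolding spec_family_def by auto
  thus ?thesis unfolding Qf_def by (simp add: cinner_scale_right)
qed

lemma spec_sorted:
  assumes f: "spec_family H k u \<mu>" and ij: "i \<le> j" "j < k"
  shows "\<mu> j \<le> \<mu> i"
proof -
  have "(\<forall>l<i. cinner (u l) (u j) = 0) \<and> cinner (u j) (u j) = 1"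
    using f ij unfolding spec_family_def by auto
  hence "Qf H (u j) \<le> \<mu> i" using f ij unfolding spec_family_def by auto
  thus ?thesis using spec_Qf[OF f ij(2)] by simp
qed

lemma spec_nonneg:
  assumes f: "spec_family H k u \<mu>" and p: "psd H" and i: "i < k"
  shows "\<mu> i \<ge> 0"
  using spec_Qf[OF f i] p unfolding Qf_def psd_cinner by metis

lemma spec_matrix:
  assumes f: "spec_family H CARD('n) u \<mu>" and ix: "bij_betw ix (UNIV::'n::finite set) {..<CARD('n)}"
  defines "U \<equiv> (\<chi> r c. u (ix c) $ r) :: complex^'n^'n"
  shows "unitary_mat U" "H = U ** real_diag (\<lambda>c. \<mu> (ix c)) ** adjoint_mat U"
proof -
  have ixlt: "ix c < CARD('n)" for c using ix by (auto simp: bij_betw_def)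
  have ixinj: "ix c = ix c' \<longleftrightarrow> c = c'" for c c' using ix by (auto simp: bij_betw_def inj_on_def)
  have "(adjoint_mat U ** U) $ c $ c' = mat 1 $ c $ c'" for c c'
  proof -
    have "(adjoint_mat U ** U) $ c $ c' = cinner (u (ix c)) (u (ix c'))"
      unfolding matrix_matrix_mult_def adjoint_mat_def U_def cinner_def by simp
    also have "\<dots> = (if c = c' then 1 else 0)"
      using f ixlt ixinj unfolding spec_family_def by auto
    finally show ?thesis by (simp add: mat_def)
  qed
  hence UU: "adjoint_mat U ** U = mat 1" by (simp add: vec_eq_iff)
  hence UU': "U ** adjoint_mat U = mat 1" using matrix_left_right_inverse by blast
  show "unitary_mat U" unfolding unitary_mat_def using UU UU' by simp
  have "(H ** U) $ r $ c = (U ** real_diag (\<lambda>c. \<mu> (ix c))) $ r $ c" for r c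
  proof -
    have "(H ** U) $ r $ c = (H *v u (ix c)) $ r"
      unfolding matrix_matrix_mult_def matrix_vector_mult_def U_def by simp
    also have "\<dots> = complex_of_real (\<mu> (ix c)) * u (ix c) $ r"
      using f ixlt unfolding spec_family_def by simp
    also have "\<dots> = (U ** real_diag (\<lambda>c. \<mu> (ix c))) $ r $ c"
    proof -
      have "\<And>k. U $ r $ k * real_diag (\<lambda>c. \<mu> (ix c)) $ k $ c = (if k = c then U $ r $ c * complex_of_real (\<mu> (ix c)) else 0)"
        unfolding real_diag_def by simp
      hence "(U ** real_diag (\<lambda>c. \<mu> (ix c))) $ r $ c = U $ r $ c * complex_of_real (\<mu> (ix c))"
        unfolding matrix_matrix_mult_def by simp
      thus ?thesis unfolding U_def by (simp add: mult.commute)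
    qed
    finally show ?thesis .
  qed
  hence HU: "H ** U = U ** real_diag (\<lambda>c. \<mu> (ix c))" by (simp add: vec_eq_iff)
  have "H = H ** (U ** adjoint_mat U)" using UU' by simp
  also have "\<dots> = U ** real_diag (\<lambda>c. \<mu> (ix c)) ** adjoint_mat U"
    by (simp add: matrix_mul_assoc HU)
  finally show "H = U ** real_diag (\<lambda>c. \<mu> (ix c)) ** adjoint_mat U" .
qed


lemma mult_diag_right: "(M ** real_diag d) $ i $ j = M $ i $ j * complex_of_real (d j)"
proof -
  have "\<And>k. M $ i $ k * real_diag d $ k $ j = (if k = j then M $ i $ j * complex_of_real (d j) else 0)"
    unfolding real_diag_def by simp
  thus ?thesis unfolding matrix_matrix_mult_def by simp
qed

lemma mult_diag_left: "(real_diag d ** M) $ i $ j = complex_of_real (d i) * M $ i $ j"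
proof -
  have "\<And>k. real_diag d $ i $ k * M $ k $ j = (if k = i then complex_of_real (d i) * M $ i $ j else 0)"
    unfolding real_diag_def by simp
  thus ?thesis unfolding matrix_matrix_mult_def by simp
qed

lemma matfun_unique:
  assumes U: "unitary_mat U" and V: "unitary_mat V"
    and eq: "U ** real_diag d ** adjoint_mat U = V ** real_diag e ** adjoint_mat V"
  shows "U ** real_diag (\<lambda>i. g (d i)) ** adjoint_mat U = V ** real_diag (\<lambda>i. g (e i)) ** adjoint_mat V"
proof -
  define W where "W = adjoint_mat V ** U"
  define G where "G = real_diag (\<lambda>i. g (d i))"
  define F where "F = real_diag (\<lambda>i. g (e i))"
  have UU: "adjoint_mat U ** U = mat 1" "U ** adjoint_mat U = mat 1" using U unfolding unitary_mat_def by auto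
  have VV: "adjoint_mat V ** V = mat 1" "V ** adjoint_mat V = mat 1" using V unfolding unitary_mat_def by auto
  have "W ** real_diag d = adjoint_mat V ** U ** real_diag d ** (adjoint_mat U ** U)"
    unfolding W_def UU by simp
  also have "\<dots> = adjoint_mat V ** (U ** real_diag d ** adjoint_mat U) ** U"
    by (simp only: matrix_mul_assoc)
  also have "\<dots> = adjoint_mat V ** (V ** real_diag e ** adjoint_mat V) ** U" using eq by simp
  also have "\<dots> = (adjoint_mat V ** V) ** real_diag e ** adjoint_mat V ** U"
    by (simp only: matrix_mul_assoc)
  also have "\<dots> = real_diag e ** W"
    unfolding W_def VV by (simp only: matrix_mul_lid matrix_mul_assoc)
  finally have WD: "W ** real_diag d = real_diag e ** W" .
  have "(W ** G) $ i $ j = (F ** W) $ i $ j" for i j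
  proof -
    have "W $ i $ j * complex_of_real (d j) = complex_of_real (e i) * W $ i $ j"
      using arg_cong[OF WD, of "\<lambda>M. M $ i $ j"] by (simp add: mult_diag_right mult_diag_left)
    hence "W $ i $ j = 0 \<or> d j = e i" by (auto simp: mult.commute)
    thus ?thesis unfolding F_def G_def by (auto simp: mult_diag_right mult_diag_left mult.commute)
  qed
  hence WG: "W ** G = F ** W" by (simp add: vec_eq_iff)
  have UVW: "U = V ** W" unfolding W_def
  proof -
    have "V ** (adjoint_mat V ** U) = (V ** adjoint_mat V) ** U" by (simp only: matrix_mul_assoc)
    thus "U = V ** (adjoint_mat V ** U)" unfolding VV by simp
  qed
  have WU: "W ** adjoint_mat U = adjoint_mat V" unfolding W_def
  proof -
    have "adjoint_mat V ** U ** adjoint_mat U = adjoint_mat V ** (U ** adjoint_mat U)" by (simp only: matrix_mul_assoc)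
    thus "adjoint_mat V ** U ** adjoint_mat U = adjoint_mat V" unfolding UU by simp
  qed
  have "U ** G ** adjoint_mat U = V ** (W ** G) ** adjoint_mat U"
    using UVW by (simp only: matrix_mul_assoc)
  also have "\<dots> = V ** F ** (W ** adjoint_mat U)"
    unfolding WG by (simp only: matrix_mul_assoc)
  also have "\<dots> = V ** F ** adjoint_mat V" unfolding WU ..
  finally show ?thesis unfolding F_def G_def .
qed

lemma matfun_eq:
  assumes U: "unitary_mat U" and d: "\<forall>i. d i \<ge> 0" and A: "A = U ** real_diag d ** adjoint_mat U"
  shows "matfun g A = U ** real_diag (\<lambda>i. g (d i)) ** adjoint_mat U"
proof -
  let ?P = "\<lambda>B. \<exists>U d. unitary_mat U \<and> (\<forall>i. d i \<ge> 0) \<and>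
       A = U ** real_diag d ** adjoint_mat U \<and> B = U ** real_diag (\<lambda>i. g (d i)) ** adjoint_mat U"
  have "?P (U ** real_diag (\<lambda>i. g (d i)) ** adjoint_mat U)" using U d A by blast
  hence "?P (matfun g A)" unfolding matfun_def by (rule someI)
  then obtain V e where V: "unitary_mat V" "A = V ** real_diag e ** adjoint_mat V"
    "matfun g A = V ** real_diag (\<lambda>i. g (e i)) ** adjoint_mat V" by blast
  have "U ** real_diag d ** adjoint_mat U = V ** real_diag e ** adjoint_mat V"
    using A V(2) by (rule trans[OF sym])
  from matfun_unique[OF U V(1) this, of g] show ?thesis by (subst V(3)) (rule sym)
qed

lemma quad_diag: "cinner y (real_diag d *v y) = complex_of_real (\<Sum>j\<in>UNIV. d j * (cmod (y$j))^2)"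
proof -
  have "\<And>j. (real_diag d *v y) $ j = complex_of_real (d j) * y $ j"
  proof -
    fix j
    have "\<And>k. real_diag d $ j $ k * y $ k = (if k = j then complex_of_real (d j) * y $ j else 0)"
      unfolding real_diag_def by simp
    thus "(real_diag d *v y) $ j = complex_of_real (d j) * y $ j" unfolding matrix_vector_mult_def by simp
  qed
  hence "cinner y (real_diag d *v y) = (\<Sum>j\<in>UNIV. cnj (y$j) * (complex_of_real (d j) * y$j))"
    unfolding cinner_def by simp
  also have "\<dots> = (\<Sum>j\<in>UNIV. complex_of_real (d j) * (cnj (y$j) * y$j))"
    by (intro sum.cong refl) (rule mult.left_commute)
  also have "\<dots> = (\<Sum>j\<in>UNIV. complex_of_real (d j * (cmod (y$j))^2))"
    by (simp only: cnj_mult_self of_real_mult)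
  finally show ?thesis by simp
qed

lemma quad_decomp:
  assumes U: "unitary_mat U"
  shows "cinner x ((U ** real_diag d ** adjoint_mat U) *v x) =
     complex_of_real (\<Sum>j\<in>UNIV. d j * (cmod ((adjoint_mat U *v x)$j))^2)"
proof -
  have "(U ** real_diag d ** adjoint_mat U) *v x = U *v (real_diag d *v (adjoint_mat U *v x))"
    by (simp add: matrix_vector_mul_assoc matrix_mul_assoc)
  hence "cinner x ((U ** real_diag d ** adjoint_mat U) *v x) = cinner (adjoint_mat U *v x) (real_diag d *v (adjoint_mat U *v x))"
    by (simp add: cinner_matrix)
  thus ?thesis by (simp add: quad_diag)
qed

lemma norm_adjoint_unitary:
  assumes U: "unitary_mat U"
  shows "(\<Sum>j\<in>UNIV. (cmod ((adjoint_mat U *v x)$j))^2) = Re (cinner x x)"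
proof -
  have "cinner (adjoint_mat U *v x) (adjoint_mat U *v x) = cinner x x"
    using unitary_cinner[OF unitary_adjoint[OF U]] .
  thus ?thesis using cinner_self_real(1) by metis
qed

lemma decomp_psd:
  assumes U: "unitary_mat U" and d: "\<forall>i. d i \<ge> 0"
  shows "psd (U ** real_diag d ** adjoint_mat U)"
  unfolding psd_cinner quad_decomp[OF U] using d by (simp add: sum_nonneg)

lemma psd_decomp_exists:
  assumes "psd (A::complex^'n::finite^'n)"
  shows "\<exists>U d. unitary_mat U \<and> (\<forall>i. d i \<ge> 0) \<and> A = U ** real_diag d ** adjoint_mat U"
proof -
  obtain u \<mu> where f: "spec_family A CARD('n) u \<mu>"
    using spec_exists[OF psd_hermitian[OF assms]] by blast
  obtain ix :: "'n \<Rightarrow> nat" where ix: "bij_betw ix UNIV {..<CARD('n)}"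
    using ex_bij_betw_finite_nat[of "UNIV::'n set"] by (auto simp: atLeast0LessThan)
  have "ix c < CARD('n)" for c using ix by (auto simp: bij_betw_def)
  hence "\<forall>c. \<mu> (ix c) \<ge> 0" using spec_nonneg[OF f assms] by blast
  moreover note spec_matrix[OF f ix]
  ultimately show ?thesis by (intro exI[of _ "\<chi> r c. u (ix c) $ r"] exI[of _ "\<lambda>c. \<mu> (ix c)"]) simp
qed


lemma power_mean:
  fixes w a :: "'i \<Rightarrow> real"
  assumes fin: "finite I" and p: "p > 1" and w: "\<forall>j\<in>I. w j \<ge> 0" and ws: "(\<Sum>j\<in>I. w j) = 1"
    and a: "\<forall>j\<in>I. a j \<ge> 0"
  shows "(\<Sum>j\<in>I. w j * a j) \<le> (\<Sum>j\<in>I. w j * a j powr p) powr (1/p)"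
proof -
  define q where "q = p / (p - 1)"
  have q: "q > 1" "1/p + 1/q = 1" using p unfolding q_def by (auto simp: field_simps)
  define M where "M = (\<Sum>j\<in>I. w j * a j powr p) powr (1/p)"
  have S0: "(\<Sum>j\<in>I. w j * a j powr p) \<ge> 0" using w a by (intro sum_nonneg) auto
  show ?thesis
  proof (cases "(\<Sum>j\<in>I. w j * a j powr p) = 0")
    case True
    have "\<forall>j\<in>I. w j * a j powr p = 0"
      using True sum_nonneg_eq_0_iff[OF fin, of "\<lambda>j. w j * a j powr p"] w a by auto
    hence "\<forall>j\<in>I. w j * a j = 0" using p by auto
    hence "(\<Sum>j\<in>I. w j * a j) = 0" by (intro sum.neutral) auto
    thus ?thesis using True by simp
  next
    case False
    hence Spos: "(\<Sum>j\<in>I. w j * a j powr p) > 0" using S0 by simp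
    hence Mpos: "M > 0" unfolding M_def by simp
    have Mp: "M powr p = (\<Sum>j\<in>I. w j * a j powr p)"
      unfolding M_def using S0 p by (simp add: powr_powr)
    have "(\<Sum>j\<in>I. w j * (a j / M)) \<le> (\<Sum>j\<in>I. w j * ((a j / M) powr p / p + 1 powr q / q))"
    proof (rule sum_mono)
      fix j assume j: "j \<in> I"
      have "a j / M * 1 \<le> (a j / M) powr p / p + 1 powr q / q"
        by (rule Youngs_inequality[OF p q(1) q(2)]) (use a j Mpos in auto)
      thus "w j * (a j / M) \<le> w j * ((a j / M) powr p / p + 1 powr q / q)"
        using w j by (intro mult_left_mono) auto
    qed
    also have "\<dots> = (\<Sum>j\<in>I. w j * a j powr p) / (p * M powr p) + (\<Sum>j\<in>I. w j) / q"
      using Mpos a by (simp add: sum_divide_distrib sum.distrib distrib_left powr_divide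
          field_simps sum_distrib_left)
    also have "\<dots> = 1" using Mp Spos ws q p by simp
    finally have "(\<Sum>j\<in>I. w j * a j) / M \<le> 1"
      by (simp add: sum_divide_distrib)
    thus ?thesis using Mpos unfolding M_def[symmetric] by simp
  qed
qed

lemma midconvex_convex:
  fixes h :: "real \<Rightarrow> real"
  assumes cont: "continuous_on UNIV h"
    and mid: "\<And>u v. h ((u + v) / 2) \<le> (h u + h v) / 2"
    and th: "0 \<le> \<theta>" "\<theta> \<le> 1"
  shows "h (\<theta> * u + (1 - \<theta>) * v) \<le> \<theta> * h u + (1 - \<theta>) * h v"
proof (rule ccontr)
  define \<phi> where "\<phi> t = h (t * u + (1 - t) * v) - t * h u - (1 - t) * h v" for t
  assume "\<not> ?thesis"
  hence pos: "\<phi> \<theta> > 0" unfolding \<phi>_def by simp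
  have cphi: "continuous_on {0..1} \<phi>" unfolding \<phi>_def
    by (intro continuous_intros continuous_on_compose2[OF cont]) auto
  have phimid: "\<phi> ((a + b) / 2) \<le> (\<phi> a + \<phi> b) / 2" for a b
  proof -
    have e: "(a + b) / 2 * u + (1 - (a + b) / 2) * v = ((a * u + (1 - a) * v) + (b * u + (1 - b) * v)) / 2"
      by (simp add: field_simps)
    have "h ((a + b) / 2 * u + (1 - (a + b) / 2) * v) \<le> (h (a * u + (1 - a) * v) + h (b * u + (1 - b) * v)) / 2"
      unfolding e by (rule mid)
    moreover have "\<phi> ((a + b) / 2) - (\<phi> a + \<phi> b) / 2 =
      h ((a + b) / 2 * u + (1 - (a + b) / 2) * v) - (h (a * u + (1 - a) * v) + h (b * u + (1 - b) * v)) / 2"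
      unfolding \<phi>_def by (simp add: field_simps)
    ultimately show ?thesis by linarith
  qed
  have phi0: "\<phi> 0 = 0" and phi1: "\<phi> 1 = 0" unfolding \<phi>_def by simp_all
  obtain m where m: "m \<in> {0..1}" "\<forall>y\<in>{0..1}. \<phi> y \<le> \<phi> m"
    using continuous_attains_sup[OF compact_Icc _ cphi] by auto
  define M where "M = \<phi> m"
  have Mpos: "M > 0" using m th pos unfolding M_def by force
  define S where "S = {t \<in> {0..1}. \<phi> t = M}"
  have clS: "closed S" unfolding S_def by (rule continuous_closed_preimage_constant[OF cphi]) simp
  have "compact ({0..1} \<inter> S)" by (rule compact_Int_closed[OF compact_Icc clS])
  moreover have "{0..1} \<inter> S = S" unfolding S_def by auto
  ultimately have cS: "compact S" by simp
  have Sne: "S \<noteq> {}" using m unfolding S_def M_def by auto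
  obtain t where t: "t \<in> S" "\<forall>y\<in>S. t \<le> y"
    using continuous_attains_inf[OF cS Sne continuous_on_id] by auto
  have t01: "0 < t" "t < 1"
  proof -
    have "t \<in> {0..1}" "\<phi> t = M" using t unfolding S_def by auto
    thus "0 < t" "t < 1" using phi0 phi1 Mpos by (auto simp: le_less)
  qed
  define d where "d = min t (1 - t)"
  have dpos: "d > 0" unfolding d_def using t01 by simp
  have a01: "t - d \<in> {0..1}" and b01: "t + d \<in> {0..1}" unfolding d_def using t01 by auto
  have "t - d \<notin> S" using t dpos by force
  hence "\<phi> (t - d) \<noteq> M" using a01 unfolding S_def by auto
  moreover have "\<phi> (t - d) \<le> M" using a01 m unfolding M_def by auto
  ultimately have pa: "\<phi> (t - d) < M" by simp
  have pb: "\<phi> (t + d) \<le> M" using b01 m unfolding M_def by auto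
  have "\<phi> t = \<phi> (((t - d) + (t + d)) / 2)" by simp
  also have "\<dots> \<le> (\<phi> (t - d) + \<phi> (t + d)) / 2" by (rule phimid)
  also have "\<dots> < M" using pa pb by simp
  finally show False using t unfolding S_def by simp
qed

lemma geom_zero_all:
  assumes gc: "geom_convex g" and mo: "mono_on {0..} g" and c: "c > 0" "g c = 0" and x: "x \<ge> 0"
  shows "g x = 0"
proof -
  have g0: "\<And>y. y \<ge> 0 \<Longrightarrow> g y \<ge> 0" using gc unfolding geom_convex_def by auto
  have gs: "\<And>a b. a > 0 \<Longrightarrow> b > 0 \<Longrightarrow> g (sqrt (a * b)) \<le> sqrt (g a * g b)"
    using gc unfolding geom_convex_def by auto
  have small: "g y = 0" if "0 \<le> y" "y \<le> c" for y
    using mono_onD[OF mo, of y c] that c g0[of y] by auto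
  show ?thesis
  proof (cases "x \<le> c")
    case True thus ?thesis using small x by simp
  next
    case False
    hence xp: "x > 0" using c by simp
    have "sqrt (c * (x^2 / c)) = x" using c xp by (simp add: power2_eq_square)
    hence "g x \<le> sqrt (g c * g (x^2 / c))" using gs[of c "x^2 / c"] c xp by simp
    also have "\<dots> = 0" using c by simp
    finally show ?thesis using g0[of x] x by simp
  qed
qed

lemma geom_weighted:
  assumes gc: "geom_convex g" and gpos: "\<And>x. x > 0 \<Longrightarrow> g x > 0"
    and ab: "a > 0" "b > 0" and th: "0 \<le> \<theta>" "\<theta> \<le> 1"
  shows "g (a powr \<theta> * b powr (1 - \<theta>)) \<le> g a powr \<theta> * g b powr (1 - \<theta>)"
proof -
  have gcont: "continuous_on {0..} g" using gc unfolding geom_convex_def by auto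
  have gs: "\<And>a b. a > 0 \<Longrightarrow> b > 0 \<Longrightarrow> g (sqrt (a * b)) \<le> sqrt (g a * g b)"
    using gc unfolding geom_convex_def by auto
  define h where "h u = ln (g (exp u))" for u
  have ch: "continuous_on UNIV h" unfolding h_def
  proof (intro continuous_on_ln ballI)
    show "continuous_on UNIV (\<lambda>x. g (exp x))"
      by (rule continuous_on_compose2[OF gcont continuous_on_exp[OF continuous_on_id]]) auto
    fix x show "g (exp x) \<noteq> 0" using gpos[of "exp x"] by simp
  qed
  have mid: "h ((u + v) / 2) \<le> (h u + h v) / 2" for u v
  proof -
    have e: "exp ((u + v) / 2) = sqrt (exp u * exp v)"
      by (rule real_sqrt_unique[symmetric]) (simp_all add: power2_eq_square exp_add[symmetric])
    have "g (exp ((u + v) / 2)) \<le> sqrt (g (exp u) * g (exp v))" unfolding e by (rule gs) simp_all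
    moreover have p1: "0 < g (exp ((u+v)/2))" "0 < sqrt (g (exp u) * g (exp v))" using gpos by auto
    ultimately have "ln (g (exp ((u + v) / 2))) \<le> ln (sqrt (g (exp u) * g (exp v)))"
      using ln_le_cancel_iff[OF p1] by simp
    also have "\<dots> = (h u + h v) / 2"
      unfolding h_def using gpos[of "exp u"] gpos[of "exp v"] by (simp add: ln_sqrt ln_mult)
    finally show ?thesis unfolding h_def .
  qed
  have "h (\<theta> * ln a + (1 - \<theta>) * ln b) \<le> \<theta> * h (ln a) + (1 - \<theta>) * h (ln b)"
    by (rule midconvex_convex[OF ch mid th])
  hence "exp (h (\<theta> * ln a + (1 - \<theta>) * ln b)) \<le> exp (\<theta> * h (ln a) + (1 - \<theta>) * h (ln b))" by simp
  moreover have "exp (h (\<theta> * ln a + (1 - \<theta>) * ln b)) = g (a powr \<theta> * b powr (1 - \<theta>))"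
    unfolding h_def using ab gpos by (simp add: powr_def exp_add mult.commute)
  moreover have "exp (\<theta> * h (ln a) + (1 - \<theta>) * h (ln b)) = g a powr \<theta> * g b powr (1 - \<theta>)"
    unfolding h_def using ab gpos[of a] gpos[of b] by (simp add: powr_def exp_add mult.commute)
  ultimately show ?thesis by simp
qed


lemma pq_q:
  fixes p q :: real
  assumes p: "p > (1::real)" and pq: "1 / p + 1 / q = 1"
  shows "q > 1"
proof -
  have e: "1/q = 1 - 1/p" using pq by simp
  have a: "0 < 1/p" "1/p < 1" using p by auto
  have "q \<noteq> 0" using e a by auto
  have "0 < 1/q" "1/q < 1" using e a by auto
  hence "q > 0" by (simp add: zero_less_divide_1_iff)
  with \<open>1/q < 1\<close> show ?thesis by (simp add: divide_less_eq)
qed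

lemma g_bound:
  fixes p q s t :: real
  assumes p: "p > 1" and pq: "1 / p + 1 / q = 1" and gc: "geom_convex g" and mo: "mono_on {0..} g"
    and s: "s \<ge> 0" and t: "t \<ge> 0" and st: "s \<le> t powr (1/p)"
  shows "g s \<le> g 1 powr (1/q) * g t powr (1/p)"
proof -
  have g0: "\<And>y. y \<ge> 0 \<Longrightarrow> g y \<ge> 0" using gc unfolding geom_convex_def by auto
  have q1: "1/q = 1 - 1/p" using pq by simp
  have pp: "0 < 1/p" "1/p < 1" using p by auto
  show ?thesis
  proof (cases "\<exists>c>0. g c = 0")
    case True
    then obtain c where c: "c > 0" "g c = 0" by blast
    have "g s = 0" using geom_zero_all[OF gc mo c s] .
    moreover have "g 1 powr (1/q) * g t powr (1/p) \<ge> 0" by simp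
    ultimately show ?thesis by simp
  next
    case False
    hence gpos: "\<And>x. x > 0 \<Longrightarrow> g x > 0" using g0 by (metis less_eq_real_def)
    show ?thesis
    proof (cases "t = 0")
      case True
      hence s0: "s = 0" using s st by simp
      have g01: "g 0 \<le> g 1" using mono_onD[OF mo, of 0 1] by simp
      show ?thesis
      proof (cases "g 0 = 0")
        case True thus ?thesis using s0 by simp
      next
        case False
        hence gp: "g 0 > 0" using g0[of 0] by simp
        have "g 0 = g 0 powr (1/q) * g 0 powr (1/p)"
          using gp pq by (simp add: powr_add[symmetric] add.commute)
        also have "\<dots> \<le> g 1 powr (1/q) * g 0 powr (1/p)"
          using g01 gp pq p by (intro mult_right_mono powr_mono2) (auto simp: q1)
        finally show ?thesis using s0 True by simp
      qed
    next
      case False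
      hence tp: "t > 0" using t by simp
      have "g s \<le> g (t powr (1/p))"
        using mono_onD[OF mo, of s "t powr (1/p)"] s st by simp
      also have "t powr (1/p) = t powr (1/p) * 1 powr (1 - 1/p)" by simp
      also have "g \<dots> \<le> g t powr (1/p) * g 1 powr (1 - 1/p)"
        by (rule geom_weighted[OF gc gpos tp]) (use pp in auto)
      finally show ?thesis by (simp add: q1 mult.commute)
    qed
  qed
qed

lemma young_step:
  fixes p q c z \<alpha> \<beta> :: real
  assumes p: "p > 1" and pq: "1 / p + 1 / q = 1" and c: "c \<ge> 0" and z: "z \<ge> 0"
    and al: "\<alpha> > 0" and be: "\<beta> > 0"
  shows "c powr (1/q) * z powr (1/p) \<le> \<alpha> powr (1/p) * \<beta> powr (1/q) * (z / (p * \<alpha>) + c / (q * \<beta>))"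
proof -
  have q: "q > 1" using pq_q[OF p pq] .
  have R: "\<alpha> powr (1/p) * \<beta> powr (1/q) * (z / (p * \<alpha>) + c / (q * \<beta>)) \<ge> 0"
    using al be c z p q by (intro mult_nonneg_nonneg add_nonneg_nonneg) auto
  show ?thesis
  proof (cases "c = 0 \<or> z = 0")
    case True thus ?thesis using R by auto
  next
    case False
    hence cz: "c > 0" "z > 0" using c z by auto
    have Y: "(z/\<alpha>) powr (1/p) * (c/\<beta>) powr (1/q) \<le> (1/p) * (z/\<alpha>) + (1/q) * (c/\<beta>)"
      by (rule Youngs_inequality_0) (use p q pq cz al be in auto)
    have "c powr (1/q) * z powr (1/p) = \<alpha> powr (1/p) * \<beta> powr (1/q) * ((z/\<alpha>) powr (1/p) * (c/\<beta>) powr (1/q))"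
      using al be cz by (simp add: powr_divide)
    also have "\<dots> \<le> \<alpha> powr (1/p) * \<beta> powr (1/q) * ((1/p) * (z/\<alpha>) + (1/q) * (c/\<beta>))"
      by (rule mult_left_mono[OF Y]) simp
    also have "\<dots> = \<alpha> powr (1/p) * \<beta> powr (1/q) * (z / (p * \<alpha>) + c / (q * \<beta>))" by simp
    finally show ?thesis .
  qed
qed

lemma N_props:
  assumes "symmetric_norm N"
  shows "N (A + B) \<le> N A + N B" "N (r *\<^sub>R A) = \<bar>r\<bar> * N A" "N A \<ge> 0"
    "unitary_mat U \<Longrightarrow> unitary_mat V \<Longrightarrow> N (U ** A ** V) = N A" "N A = 0 \<longleftrightarrow> A = 0"
proof -
  show "N (A + B) \<le> N A + N B" "N A \<ge> 0" "N A = 0 \<longleftrightarrow> A = 0"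
    "unitary_mat U \<Longrightarrow> unitary_mat V \<Longrightarrow> N (U ** A ** V) = N A"
    using assms unfolding symmetric_norm_def by auto
  have "(r *\<^sub>R A)$i$j = complex_of_real r * A$i$j" for i j
    by (simp add: scaleR_conv_of_real[symmetric])
  hence "cscale_mat (complex_of_real r) A = r *\<^sub>R A"
    unfolding cscale_mat_def by (simp add: vec_eq_iff)
  thus "N (r *\<^sub>R A) = \<bar>r\<bar> * N A" using assms unfolding symmetric_norm_def by (metis norm_of_real)
qed

lemma diag_lin: "a *\<^sub>R real_diag x + b *\<^sub>R real_diag y = real_diag (\<lambda>i. a * x i + b * y i)"
  unfolding real_diag_def by (auto simp: vec_eq_iff of_real_def scaleR_add_left)

lemma diag_mult: "real_diag a ** real_diag b = real_diag (\<lambda>i. a i * b i)"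
  by (simp add: vec_eq_iff mult_diag_right) (simp add: real_diag_def)

lemma real_diag_one: "real_diag (\<lambda>i. 1) = mat 1"
  unfolding real_diag_def mat_def by (simp add: vec_eq_iff)

lemma N_diag_step:
  assumes N: "symmetric_norm N" and z: "\<forall>i. z i \<ge> 0" and c: "0 \<le> c" "c \<le> z j"
  shows "N (real_diag (z(j := c))) \<le> N (real_diag z)"
proof (cases "z j = 0")
  case True
  hence "z(j := c) = z" using c by auto
  thus ?thesis by simp
next
  case False
  hence zj: "z j > 0" using z by (metis less_eq_real_def)
  define \<theta> where "\<theta> = c / z j"
  have th: "0 \<le> \<theta>" "\<theta> \<le> 1" unfolding \<theta>_def using c zj by auto
  define e where "e i = (if i = j then -1 else (1::real))" for i
  define E where "E = real_diag e"
  have ee: "\<And>i. e i * e i = 1" unfolding e_def by simp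
  have EU: "unitary_mat E" unfolding unitary_mat_def E_def
    by (simp add: diag_mult ee real_diag_one)
  have ED: "E ** real_diag z ** mat 1 = real_diag (\<lambda>i. e i * z i)"
    unfolding E_def by (simp add: diag_mult)
  have decomp: "real_diag (z(j := c)) = ((1 + \<theta>)/2) *\<^sub>R real_diag z + ((1 - \<theta>)/2) *\<^sub>R (E ** real_diag z ** mat 1)"
    unfolding ED diag_lin
  proof -
    have "(z(j := c)) i = (1 + \<theta>) / 2 * z i + (1 - \<theta>) / 2 * (e i * z i)" for i
    proof (cases "i = j")
      case True
      have "c = \<theta> * z j" unfolding \<theta>_def using zj by simp
      thus ?thesis using True unfolding e_def by (simp add: field_simps)
    next
      case False thus ?thesis unfolding e_def by (simp add: field_simps)
    qed
    thus "real_diag (z(j := c)) = real_diag (\<lambda>i. (1 + \<theta>) / 2 * z i + (1 - \<theta>) / 2 * (e i * z i))"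
      by presburger
  qed
  have "N (real_diag (z(j := c))) \<le> N (((1 + \<theta>)/2) *\<^sub>R real_diag z) + N (((1 - \<theta>)/2) *\<^sub>R (E ** real_diag z ** mat 1))"
    unfolding decomp by (rule N_props(1)[OF N])
  also have "\<dots> = (1 + \<theta>)/2 * N (real_diag z) + (1 - \<theta>)/2 * N (real_diag z)"
    using th N_props(2)[OF N] N_props(4)[OF N EU unitary_mat1] by simp
  also have "\<dots> = N (real_diag z)" by (simp add: field_simps)
  finally show ?thesis .
qed

lemma N_diag_mono:
  assumes N: "symmetric_norm N" and y: "\<forall>i. 0 \<le> y i" and yw: "\<forall>i. y i \<le> w i"
  shows "N (real_diag y) \<le> N (real_diag (w :: 'n::finite \<Rightarrow> real))"
proof -
  have "finite F \<Longrightarrow> N (real_diag (\<lambda>i. if i \<in> F then y i else w i)) \<le> N (real_diag w)" for F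
  proof (induct F rule: finite_induct)
    case empty thus ?case by simp
  next
    case (insert j F)
    define z where "z i = (if i \<in> F then y i else w i)" for i
    have z: "\<forall>i. z i \<ge> 0" unfolding z_def using y yw by (auto intro: order_trans)
    have zj: "z j = w j" unfolding z_def using insert by simp
    have eq: "(\<lambda>i. if i \<in> insert j F then y i else w i) = z(j := y j)"
      unfolding z_def by auto
    have "N (real_diag (z(j := y j))) \<le> N (real_diag z)"
      by (rule N_diag_step[OF N z]) (use y yw zj in auto)
    also have "\<dots> \<le> N (real_diag w)" using insert unfolding z_def by simp
    finally show ?case unfolding eq .
  qed
  from this[of UNIV] show ?thesis by simp
qed


lemma cinner_sum_mat:
  "cinner x ((\<Sum>i\<in>I. l i *\<^sub>R B i) *v x) = (\<Sum>i\<in>I. complex_of_real (l i) * cinner x (B i *v x))"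
  by (simp add: mv_sum_mat mv_scaleR_mat cinner_sum_right cinner_scale_right)

lemma Qf_sum: "Qf (\<Sum>i\<in>I. l i *\<^sub>R B i) x = (\<Sum>i\<in>I. l i * Qf (B i) x)"
  unfolding Qf_def cinner_sum_mat by (simp add: Re_sum)

lemma psd_sum:
  assumes "\<forall>i\<in>I. psd (B i)" "\<forall>i\<in>I. l i \<ge> 0"
  shows "psd (\<Sum>i\<in>I. l i *\<^sub>R B i)"
  unfolding psd_cinner cinner_sum_mat
  using assms unfolding psd_cinner by (auto simp: Re_sum Im_sum intro!: sum_nonneg sum.neutral)

lemma jensen_one:
  assumes A: "psd A" and p: "p > 1" and x: "cinner x x = 1"
  shows "Qf A x \<le> (Qf (mat_powr A p) x) powr (1/p)" "psd (mat_powr A p)"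
proof -
  obtain U d where U: "unitary_mat U" and d: "\<forall>i. d i \<ge> 0" and Ad: "A = U ** real_diag d ** adjoint_mat U"
    using psd_decomp_exists[OF A] by blast
  have Ap: "mat_powr A p = U ** real_diag (\<lambda>i. d i powr p) ** adjoint_mat U"
    unfolding mat_powr_def by (rule matfun_eq[OF U d Ad])
  show "psd (mat_powr A p)" unfolding Ap by (rule decomp_psd[OF U]) simp
  define w where "w j = (cmod ((adjoint_mat U *v x)$j))^2" for j
  have ws: "(\<Sum>j\<in>UNIV. w j) = 1" unfolding w_def norm_adjoint_unitary[OF U] x by simp
  have Q1: "Qf A x = (\<Sum>j\<in>UNIV. w j * d j)"
    unfolding Qf_def Ad quad_decomp[OF U] w_def by (simp add: mult.commute)
  have Q2: "Qf (mat_powr A p) x = (\<Sum>j\<in>UNIV. w j * d j powr p)"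
    unfolding Qf_def Ap quad_decomp[OF U] w_def by (simp add: mult.commute)
  show "Qf A x \<le> (Qf (mat_powr A p) x) powr (1/p)"
    unfolding Q1 Q2 by (rule power_mean[OF finite p]) (use ws d in \<open>auto simp: w_def\<close>)
qed

lemma mv_sum: "(A::complex^'n::finite^'n) *v (\<Sum>i\<in>S. f i) = (\<Sum>i\<in>S. A *v f i)"
  by (induct S rule: infinite_finite_induct) (auto simp: mv_add)

lemma quad_expand:
  fixes k :: nat and u :: "nat \<Rightarrow> complex^'n::finite" and c :: "nat \<Rightarrow> complex" and \<mu> :: "nat \<Rightarrow> real"
  assumes on: "\<forall>i\<le>k. \<forall>j\<le>k. cinner (u i) (u j) = (if i = j then 1 else 0)"
    and eig: "\<forall>j\<le>k. H *v u j = complex_of_real (\<mu> j) *s u j"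
    and x: "x = (\<Sum>j\<le>k. c j *s u j)"
  shows "cinner x (H *v x) = complex_of_real (\<Sum>j\<le>k. \<mu> j * (cmod (c j))^2)"
proof -
  have Hx: "H *v x = (\<Sum>j\<le>k. (c j * complex_of_real (\<mu> j)) *s u j)"
    unfolding x mv_sum by (intro sum.cong refl) (simp add: mv_scale eig vector_smult_assoc mult.commute)
  define y where "y = (\<Sum>j\<le>k. (c j * complex_of_real (\<mu> j)) *s u j)"
  have "cinner x (H *v x) = cinner x y" unfolding Hx y_def ..
  also have "\<dots> = (\<Sum>i\<le>k. cnj (c i) * cinner (u i) y)"
    unfolding x by (simp add: cinner_sum_left cinner_scale_left)
  also have "\<dots> = (\<Sum>i\<le>k. cnj (c i) * (c i * complex_of_real (\<mu> i)))"
  proof (intro sum.cong refl)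
    fix i assume i: "i \<in> {..k}"
    have "cinner (u i) y = (\<Sum>j\<le>k. (c j * complex_of_real (\<mu> j)) * cinner (u i) (u j))"
      unfolding y_def by (simp add: cinner_sum_right cinner_scale_right)
    also have "\<dots> = (\<Sum>j\<le>k. if j = i then c i * complex_of_real (\<mu> i) else 0)"
      using on i by (intro sum.cong refl) auto
    also have "\<dots> = c i * complex_of_real (\<mu> i)" using i by (simp add: sum.delta)
    finally show "cnj (c i) * cinner (u i) y = cnj (c i) * (c i * complex_of_real (\<mu> i))" by simp
  qed
  also have "\<dots> = (\<Sum>i\<le>k. complex_of_real (\<mu> i * (cmod (c i))^2))"
  proof (intro sum.cong refl)
    fix i
    have "cnj (c i) * (c i * complex_of_real (\<mu> i)) = complex_of_real (\<mu> i) * (cnj (c i) * c i)"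
      by (simp add: mult_ac)
    also have "\<dots> = complex_of_real (\<mu> i * (cmod (c i))^2)" by (simp only: cnj_mult_self of_real_mult)
    finally show "cnj (c i) * (c i * complex_of_real (\<mu> i)) = complex_of_real (\<mu> i * (cmod (c i))^2)" .
  qed
  finally show ?thesis by simp
qed

lemma family_on:
  fixes k :: nat and u :: "nat \<Rightarrow> complex^'n::finite"
  assumes "\<forall>i<k. \<forall>j<k. cinner (u i) (u j) = (if i = j then 1 else 0)"
  shows "inj_on u {..<k}" "orthonormal_set (u ` {..<k})"
proof -
  show inj: "inj_on u {..<k}"
  proof (rule inj_onI)
    fix i j assume "i \<in> {..<k}" "j \<in> {..<k}" "u i = u j"
    thus "i = j" using assms by (metis lessThan_iff one_neq_zero)
  qed
  show "orthonormal_set (u ` {..<k})"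
    unfolding orthonormal_set_def
  proof (intro ballI)
    fix x y assume "x \<in> u ` {..<k}" "y \<in> u ` {..<k}"
    then obtain i j where ij: "i < k" "j < k" "x = u i" "y = u j" by auto
    show "cinner x y = (if x = y then 1 else 0)"
      using assms ij inj by (auto simp: inj_on_def)
  qed
qed


lemma eig_compare:
  fixes S P :: "complex^'n::finite^'n" and p :: real
  assumes fS: "spec_family S CARD('n) u s" and fP: "spec_family P CARD('n) v t"
    and k: "k < CARD('n)" and p: "p > 0"
    and hyp: "\<And>x. cinner x x = 1 \<Longrightarrow> Qf S x \<le> (Qf P x) powr (1/p)"
    and Pnn: "\<And>x. Qf P x \<ge> 0"
  shows "s k \<le> t k powr (1/p)"
proof -
  have onv: "\<forall>i<k. \<forall>j<k. cinner (v i) (v j) = (if i = j then 1 else 0)"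
    using fP k unfolding spec_family_def by auto
  have onu: "\<forall>i<Suc k. \<forall>j<Suc k. cinner (u i) (u j) = (if i = j then 1 else 0)"
    using fS k unfolding spec_family_def by auto
  note fv = family_on[OF onv] and fu = family_on[OF onu]
  define Bv where "Bv = v ` {..<k}"
  define Bu where "Bu = u ` {..<Suc k}"
  have cBv: "card Bv = k" unfolding Bv_def using card_image[OF fv(1)] by simp
  have cBu: "card Bu = Suc k" unfolding Bu_def using card_image[OF fu(1)] by simp
  define W where "W = vec.span Bu"
  have dW: "vec.dim W = Suc k" unfolding W_def using on_dim_span[OF fu(2)[folded Bu_def]] cBu
    by (simp add: Bu_def)
  obtain x where xW: "x \<in> W" and x0: "x \<noteq> 0" and xv: "\<forall>b\<in>Bv. cinner b x = 0"
    using kernel_lemma[OF fv(2)[folded Bv_def] _ vec.subspace_span[of Bu, folded W_def]] cBv dW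
    unfolding Bv_def by auto
  define x1 where "x1 = complex_of_real (1 / norm x) *s x"
  have x1W: "x1 \<in> W" unfolding x1_def W_def using xW unfolding W_def by (rule vec.span_scale)
  have x11: "cinner x1 x1 = 1"
  proof -
    have "cinner x1 x1 = complex_of_real ((cmod (complex_of_real (1/norm x)))^2) * cinner x x"
      unfolding x1_def by (rule cinner_scale_self)
    also have "\<dots> = complex_of_real ((1/norm x)^2 * (norm x)^2)"
      by (simp only: cinner_self_of_real norm_of_real power2_abs of_real_mult)
    also have "\<dots> = 1" using x0 by (simp add: power_divide)
    finally show ?thesis .
  qed
  have x1v: "\<forall>j<k. cinner (v j) x1 = 0"
    using xv unfolding x1_def Bv_def by (auto simp: cinner_scale_right)
  define c where "c j = cinner (u j) x1" for j
  have "x1 = (\<Sum>b\<in>Bu. cinner b x1 *s b)"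
    using on_expand[OF fu(2)[folded Bu_def] _ x1W[unfolded W_def]] unfolding Bu_def by simp
  also have "\<dots> = (\<Sum>j\<in>{..<Suc k}. c j *s u j)"
    unfolding Bu_def c_def using sum.reindex[OF fu(1), of "\<lambda>b. cinner b x1 *s b"] by simp
  finally have x1e: "x1 = (\<Sum>j\<le>k. c j *s u j)" by (simp add: lessThan_Suc_atMost)
  have onu': "\<forall>i\<le>k. \<forall>j\<le>k. cinner (u i) (u j) = (if i = j then 1 else 0)"
    using onu by (simp add: less_Suc_eq_le)
  have eS: "\<forall>j\<le>k. S *v u j = complex_of_real (s j) *s u j"
    using fS k unfolding spec_family_def by auto
  have e1: "\<forall>j\<le>k. mat 1 *v u j = complex_of_real ((\<lambda>_. 1) j) *s u j" by simp
  have QS: "cinner x1 (S *v x1) = complex_of_real (\<Sum>j\<le>k. s j * (cmod (c j))^2)"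
    by (rule quad_expand[OF onu' eS x1e])
  have QI: "cinner x1 (mat 1 *v x1) = complex_of_real (\<Sum>j\<le>k. 1 * (cmod (c j))^2)"
    by (rule quad_expand[OF onu' e1 x1e])
  hence "complex_of_real (\<Sum>j\<le>k. 1 * (cmod (c j))^2) = 1" using x11 by (metis matrix_vector_mul_lid)
  hence sum1: "(\<Sum>j\<le>k. (cmod (c j))^2) = 1" by (simp only: of_real_eq_1_iff mult_1)
  have "s k = (\<Sum>j\<le>k. s k * (cmod (c j))^2)" by (simp add: sum_distrib_left[symmetric] sum1)
  also have "\<dots> \<le> (\<Sum>j\<le>k. s j * (cmod (c j))^2)"
  proof (rule sum_mono)
    fix j assume "j \<in> {..k}"
    hence "s k \<le> s j" using spec_sorted[OF fS _ k, of j] by simp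
    thus "s k * (cmod (c j))^2 \<le> s j * (cmod (c j))^2" by (rule mult_right_mono) simp
  qed
  also have "\<dots> = Qf S x1" unfolding Qf_def QS by simp
  also have "\<dots> \<le> (Qf P x1) powr (1/p)" by (rule hyp[OF x11])
  also have "\<dots> \<le> t k powr (1/p)"
  proof (rule powr_mono2)
    show "0 \<le> 1/p" using p by simp
    show "0 \<le> Qf P x1" by (rule Pnn)
    show "Qf P x1 \<le> t k" using fP k x1v x11 unfolding spec_family_def by auto
  qed
  finally show ?thesis .
qed

lemma real_diag_zero_iff: "real_diag d = 0 \<longleftrightarrow> (\<forall>c. d c = 0)"
proof
  assume "real_diag d = 0"
  hence "\<And>c. real_diag d $ c $ c = 0" by simp
  thus "\<forall>c. d c = 0" unfolding real_diag_def by simp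
next
  assume "\<forall>c. d c = 0"
  thus "real_diag d = 0" unfolding real_diag_def by (simp add: vec_eq_iff)
qed

lemma axis_unit: "cinner (axis a 1) (axis a (1::complex)) = 1"
  by (simp only: cinner_axis) (simp add: axis_def)

theorem corollary1p5:
  fixes A :: "nat \<Rightarrow> complex^'n::finite^'n" and l :: "nat \<Rightarrow> real"
    and m :: nat and p q :: real
    and N :: "complex^'n^'n \<Rightarrow> real" and g :: "real \<Rightarrow> real"
  assumes "\<forall>i<m. psd (A i)"
    and "\<forall>i<m. l i > 0"
    and "(\<Sum>i<m. l i) = 1"
    and "p > 1" and "1 / p + 1 / q = 1"
    and "symmetric_norm N"
    and "mono_on {0..} g" and "geom_convex g"
  shows "N (matfun g (\<Sum>i<m. l i *\<^sub>R A i))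
    \<le> N (matfun g (mat 1)) powr (1 / q) * N (matfun g (\<Sum>i<m. l i *\<^sub>R mat_powr (A i) p)) powr (1 / p)"
proof -
  note Apsd = assms(1) and lpos = assms(2) and lsum = assms(3) and p = assms(4) and pq = assms(5)
    and N = assms(6) and mo = assms(7) and gc = assms(8)
  define S where "S = (\<Sum>i<m. l i *\<^sub>R A i)"
  define P where "P = (\<Sum>i<m. l i *\<^sub>R mat_powr (A i) p)"
  have q: "q > 1" using pq_q[OF p pq] .
  have g0: "\<And>y. y \<ge> 0 \<Longrightarrow> g y \<ge> 0" using gc unfolding geom_convex_def by auto
  have Appsd: "\<forall>i<m. psd (mat_powr (A i) p)"
    using jensen_one(2)[OF _ p axis_unit] Apsd by blast
  have psdS: "psd S" unfolding S_def by (rule psd_sum) (use Apsd lpos in auto)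
  have psdP: "psd P" unfolding P_def by (rule psd_sum) (use Appsd lpos in auto)
  have Pnn: "\<And>x. Qf P x \<ge> 0" using psdP unfolding psd_cinner Qf_def by auto
  have hyp: "Qf S x \<le> (Qf P x) powr (1/p)" if x: "cinner x x = 1" for x
  proof -
    define b where "b i = Qf (mat_powr (A i) p) x" for i
    have bnn: "\<forall>i<m. b i \<ge> 0" using Appsd unfolding b_def psd_cinner Qf_def by auto
    have "Qf S x = (\<Sum>i<m. l i * Qf (A i) x)" unfolding S_def Qf_sum ..
    also have "\<dots> \<le> (\<Sum>i<m. l i * b i powr (1/p))"
      unfolding b_def using jensen_one(1)[OF _ p x] Apsd lpos
      by (intro sum_mono mult_left_mono) auto
    also have "\<dots> \<le> (\<Sum>i<m. l i * (b i powr (1/p)) powr p) powr (1/p)"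
      by (rule power_mean[OF _ p]) (use lpos lsum in auto)
    also have "(\<Sum>i<m. l i * (b i powr (1/p)) powr p) = (\<Sum>i<m. l i * b i)"
    proof (intro sum.cong refl)
      fix i assume "i \<in> {..<m}"
      hence "b i \<ge> 0" using bnn by auto
      thus "l i * (b i powr (1/p)) powr p = l i * b i" using p by (simp add: powr_powr)
    qed
    also have "(\<Sum>i<m. l i * b i) = Qf P x" unfolding P_def Qf_sum b_def ..
    finally show ?thesis .
  qed
  obtain u s where fS: "spec_family S CARD('n) u s"
    using spec_exists[OF psd_hermitian[OF psdS]] by blast
  obtain v t where fP: "spec_family P CARD('n) v t"
    using spec_exists[OF psd_hermitian[OF psdP]] by blast
  obtain ix :: "'n \<Rightarrow> nat" where ix: "bij_betw ix UNIV {..<CARD('n)}"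
    using ex_bij_betw_finite_nat[of "UNIV::'n set"] by (auto simp: atLeast0LessThan)
  have ixlt: "ix c < CARD('n)" for c using ix by (auto simp: bij_betw_def)
  have cmp: "s (ix c) \<le> t (ix c) powr (1/p)" for c
    by (rule eig_compare[OF fS fP ixlt _ hyp Pnn]) (use p in auto)
  have snn: "s (ix c) \<ge> 0" for c using spec_nonneg[OF fS psdS ixlt] .
  have tnn: "t (ix c) \<ge> 0" for c using spec_nonneg[OF fP psdP ixlt] .
  define US :: "complex^'n^'n" where "US = (\<chi> r c. u (ix c) $ r)"
  define UP :: "complex^'n^'n" where "UP = (\<chi> r c. v (ix c) $ r)"
  have US: "unitary_mat US" "S = US ** real_diag (\<lambda>c. s (ix c)) ** adjoint_mat US"
    using spec_matrix[OF fS ix] unfolding US_def by auto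
  have UP: "unitary_mat UP" "P = UP ** real_diag (\<lambda>c. t (ix c)) ** adjoint_mat UP"
    using spec_matrix[OF fP ix] unfolding UP_def by auto
  define y where "y c = g (s (ix c))" for c
  define z where "z c = g (t (ix c))" for c
  define \<gamma> where "\<gamma> = g 1"
  have MS: "matfun g S = US ** real_diag y ** adjoint_mat US"
    unfolding y_def by (rule matfun_eq[OF US(1) _ US(2)]) (use snn in auto)
  have MP: "matfun g P = UP ** real_diag z ** adjoint_mat UP"
    unfolding z_def by (rule matfun_eq[OF UP(1) _ UP(2)]) (use tnn in auto)
  have h1: "mat 1 = mat 1 ** real_diag (\<lambda>c::'n. 1) ** adjoint_mat (mat 1)"
    by (simp add: real_diag_one)
  have M1: "matfun g (mat 1) = mat 1 ** real_diag (\<lambda>c::'n. \<gamma>) ** adjoint_mat (mat 1)"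
    unfolding \<gamma>_def using matfun_eq[OF unitary_mat1 _ h1, of g] by simp
  have NS: "N (matfun g S) = N (real_diag y)"
    unfolding MS by (rule N_props(4)[OF N US(1) unitary_adjoint[OF US(1)]])
  have NP: "N (matfun g P) = N (real_diag z)"
    unfolding MP by (rule N_props(4)[OF N UP(1) unitary_adjoint[OF UP(1)]])
  have N1: "N (matfun g (mat 1)) = N (real_diag (\<lambda>c::'n. \<gamma>))"
    unfolding M1 by (rule N_props(4)[OF N unitary_mat1 unitary_adjoint[OF unitary_mat1]])
  have ynn: "y c \<ge> 0" for c unfolding y_def using g0 snn by auto
  have znn: "z c \<ge> 0" for c unfolding z_def using g0 tnn by auto
  have gnn: "\<gamma> \<ge> 0" unfolding \<gamma>_def using g0 by auto
  have yb: "y c \<le> \<gamma> powr (1/q) * z c powr (1/p)" for c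
    unfolding y_def z_def \<gamma>_def by (rule g_bound[OF p pq gc mo snn tnn cmp])
  define \<alpha> where "\<alpha> = N (real_diag z)"
  define \<beta> where "\<beta> = N (real_diag (\<lambda>c::'n. \<gamma>))"
  have RHS: "N (matfun g (mat 1)) powr (1 / q) * N (matfun g P) powr (1 / p) = \<beta> powr (1/q) * \<alpha> powr (1/p)"
    unfolding N1 NP \<alpha>_def \<beta>_def ..
  have goal: "N (real_diag y) \<le> \<beta> powr (1/q) * \<alpha> powr (1/p)"
  proof (cases "\<alpha> = 0 \<or> \<beta> = 0")
    case True
    have "\<forall>c. y c = 0"
    proof
      fix c
      from True have "(\<forall>c. z c = 0) \<or> \<gamma> = 0"
        unfolding \<alpha>_def \<beta>_def N_props(5)[OF N] real_diag_zero_iff by auto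
      hence "\<gamma> powr (1/q) * z c powr (1/p) = 0" by auto
      thus "y c = 0" using yb[of c] ynn[of c] by linarith
    qed
    hence "real_diag y = 0" by (simp add: real_diag_zero_iff)
    hence "N (real_diag y) = 0" using N_props(5)[OF N] by simp
    thus ?thesis by simp
  next
    case False
    have al: "\<alpha> > 0" using False N_props(3)[OF N] unfolding \<alpha>_def by (metis less_eq_real_def)
    have be: "\<beta> > 0" using False N_props(3)[OF N] unfolding \<beta>_def by (metis less_eq_real_def)
    define K where "K = \<alpha> powr (1/p) * \<beta> powr (1/q)"
    have Knn: "K \<ge> 0" unfolding K_def by simp
    define w where "w c = K / (p * \<alpha>) * z c + K / (q * \<beta>) * \<gamma>" for c
    have yw: "y c \<le> w c" for c
    proof -
      have "y c \<le> \<gamma> powr (1/q) * z c powr (1/p)" by (rule yb)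
      also have "\<dots> \<le> K * (z c / (p * \<alpha>) + \<gamma> / (q * \<beta>))"
        unfolding K_def by (rule young_step[OF p pq gnn znn al be])
      also have "\<dots> = w c" unfolding w_def by (simp add: field_simps)
      finally show ?thesis .
    qed
    have "N (real_diag y) \<le> N (real_diag w)"
      by (rule N_diag_mono[OF N]) (use ynn yw in auto)
    also have "real_diag w = (K / (p * \<alpha>)) *\<^sub>R real_diag z + (K / (q * \<beta>)) *\<^sub>R real_diag (\<lambda>c::'n. \<gamma>)"
      unfolding diag_lin w_def ..
    also have "N \<dots> \<le> N ((K / (p * \<alpha>)) *\<^sub>R real_diag z) + N ((K / (q * \<beta>)) *\<^sub>R real_diag (\<lambda>c::'n. \<gamma>))"
      by (rule N_props(1)[OF N])
    also have "\<dots> = K / (p * \<alpha>) * \<alpha> + K / (q * \<beta>) * \<beta>"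
      unfolding N_props(2)[OF N] \<alpha>_def \<beta>_def using Knn p q al be
      by (simp add: \<alpha>_def[symmetric] \<beta>_def[symmetric])
    also have "\<dots> = K * (1/p + 1/q)" using al be by (simp add: field_simps)
    also have "\<dots> = \<beta> powr (1/q) * \<alpha> powr (1/p)" unfolding K_def pq by simp
    finally show ?thesis .
  qed
  show ?thesis unfolding S_def[symmetric] P_def[symmetric] RHS NS using goal .
qed

end
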